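(* Let $n$ be a positive integer and let $x$ be a complex number such that no denominator below vanishes. Then \[ \sum_{k=0}^{n}(-1)^k\binom{n}{k}\frac{\binom{2x+k}{k}}{\binom{2x+n+k}{k}} \frac{1+2x+2k}{1+2x+n+k}H_{k}^2(x) =\frac{1}{2n}\frac{\binom{2x+n}{n}}{\binom{x+n}{n}^2}\big\{H_{n-1}-H_{n}(x)\big\}, \] where $H_k^2(x)$ denotes $(H_k(x))^2$.
   Context: For complex $z$ and a nonnegative integer $k$, $\binom{z}{k}=\frac{z(z-1)\cdots(z-k+1)}{k!}$ (with $\binom{z}{0}=1$). For complex $x$ and nonnegative integer $m$, $H_0(x)=0$ and $H_m(x)=\sum_{j=1}^m\frac{1}{x+j}$; $H_m=H_m(0)=\sum_{j=1}^m\frac1j$. The parameter $x$ is assumed to be such that all denominators are nonzero. *)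

theory Defs
  imports Complex_Main
begin

definition Hx :: "nat \<Rightarrow> complex \<Rightarrow> complex" where
  "Hx m x = (\<Sum>j=1..m. 1 / (x + of_nat j))"

end

theory Submission
  imports Defs "HOL-Computational_Algebra.Polynomial"
begin


definition DF :: "complex \<Rightarrow> complex \<Rightarrow> complex \<Rightarrow> nat \<Rightarrow> nat \<Rightarrow> complex" where
 "DF a b d n k = (-1)^k * of_nat (n choose k) * pochhammer a k * (a + 2*of_nat k) * pochhammer b k ^ 2
     / (pochhammer d k ^ 2 * pochhammer (1 + a + of_nat n) k)"

definition DM :: "complex \<Rightarrow> complex \<Rightarrow> complex \<Rightarrow> nat \<Rightarrow> nat \<Rightarrow> complex" where
 "DM a b d n k = (-1)^k * pochhammer a k * pochhammer b k ^ 2 / (pochhammer d k ^ 2 * pochhammer (2 + a + of_nat n) k)"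

definition Dg :: "complex \<Rightarrow> complex \<Rightarrow> complex \<Rightarrow> nat \<Rightarrow> nat \<Rightarrow> complex" where
 "Dg a b d n k = - DM a b d n k * (of_nat (Suc n choose k) - of_nat (n choose k))
     * (d + of_nat k - 1)^2 * (a + of_nat n + 1 + of_nat k) / (of_nat n + d)^2"

lemma choose_rel:
  "(of_nat (Suc n choose k) - of_nat (n choose k) :: complex) * (of_nat n + 1 - of_nat k)
     = of_nat (n choose k) * of_nat k"
proof (cases "k \<le> Suc n")
  case True
  have "(Suc n - k) * (Suc n choose k) = Suc n * (n choose k)"
    using binomial_absorb_comp[of "Suc n" k] by simp
  then have "(of_nat (Suc n - k) * of_nat (Suc n choose k) :: complex) = of_nat (Suc n) * of_nat (n choose k)"
    by (metis of_nat_mult)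
  then have "(of_nat n + 1 - of_nat k) * of_nat (Suc n choose k) = (of_nat n + 1 :: complex) * of_nat (n choose k)"
    using True by (simp add: of_nat_diff add.commute)
  then show ?thesis by (simp add: algebra_simps)
next
  case False
  then have z: "Suc n choose k = 0" "n choose k = 0" by (simp_all add: binomial_eq_0)
  show ?thesis unfolding z by simp
qed

lemma key_alg:
  fixes a b d c c' nn kk :: complex
  assumes hb: "b = 1 + a - d" and hc: "c' * (nn + 1 - kk) = c * kk"
    and hk0: "kk = 0 \<Longrightarrow> c' = 0" and hk1: "kk = nn + 1 \<Longrightarrow> c = 0"
    and nd: "nn + d \<noteq> 0"
  shows "(c + c') * (a + 2*kk) * (nn+d)^2 - c * (a + 2*kk) * (d - b + nn) * (1 + a + nn + kk)
      = c * (a + kk) * (b + kk)^2 + c' * (d + kk - 1)^2 * (a + nn + 1 + kk)"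
proof -
  have P: "(nn + 1 - kk) * ((a + 2*kk) * (nn+d)^2 - (a + 2*kk) * (d - b + nn) * (1 + a + nn + kk) - (a + kk) * (b + kk)^2)
     + kk * ((a + 2*kk) * (nn+d)^2 - (d + kk - 1)^2 * (a + nn + 1 + kk)) = 0"
    unfolding hb by algebra
  show ?thesis
  proof (cases "kk = 0")
    case True
    then show ?thesis using hk0 unfolding hb by algebra
  next
    case k0: False
    show ?thesis
    proof (cases "kk = nn + 1")
      case True
      then show ?thesis using hk1 by algebra
    next
      case False
      then have ne: "nn + 1 - kk \<noteq> 0" by auto
      have "(nn + 1 - kk) * ((c + c') * (a + 2*kk) * (nn+d)^2 - c * (a + 2*kk) * (d - b + nn) * (1 + a + nn + kk)
          - (c * (a + kk) * (b + kk)^2 + c' * (d + kk - 1)^2 * (a + nn + 1 + kk))) = 0"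
      proof -
        have "(nn + 1 - kk) * ((c + c') * (a + 2*kk) * (nn+d)^2 - c * (a + 2*kk) * (d - b + nn) * (1 + a + nn + kk)
          - (c * (a + kk) * (b + kk)^2 + c' * (d + kk - 1)^2 * (a + nn + 1 + kk)))
          = c * ((nn + 1 - kk) * ((a + 2*kk) * (nn+d)^2 - (a + 2*kk) * (d - b + nn) * (1 + a + nn + kk) - (a + kk) * (b + kk)^2))
            + (c' * (nn + 1 - kk)) * ((a + 2*kk) * (nn+d)^2 - (d + kk - 1)^2 * (a + nn + 1 + kk))"
          by algebra
        also have "... = c * ((nn + 1 - kk) * ((a + 2*kk) * (nn+d)^2 - (a + 2*kk) * (d - b + nn) * (1 + a + nn + kk) - (a + kk) * (b + kk)^2)
            + kk * ((a + 2*kk) * (nn+d)^2 - (d + kk - 1)^2 * (a + nn + 1 + kk)))"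
          unfolding hc by algebra
        also have "... = 0" using P by simp
        finally show ?thesis .
      qed
      then show ?thesis using ne by simp
    qed
  qed
qed

lemma poch_nz_Suc: "pochhammer (z::complex) (Suc k) \<noteq> 0 \<Longrightarrow> pochhammer z k \<noteq> 0"
  by (simp add: pochhammer_rec')

lemma wz_step:
  assumes hb: "b = 1 + a - d"
    and pd: "pochhammer d (Suc k) \<noteq> 0" and pa: "pochhammer (2 + a + of_nat n) (Suc k) \<noteq> 0"
    and a1: "1 + a + of_nat n \<noteq> 0" and nd: "of_nat n + d \<noteq> 0"
  shows "DF a b d (Suc n) k - (a + of_nat n + 1) * (d - b + of_nat n) / (of_nat n + d)^2 * DF a b d n k
       = Dg a b d n (Suc k) - Dg a b d n k"
proof -
  define M where "M = DM a b d n k"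
  define c where "c = (of_nat (n choose k) :: complex)"
  define c1 where "c1 = (of_nat (Suc n choose k) :: complex)"
  define c' where "c' = c1 - c"
  have pd0: "pochhammer d k \<noteq> 0" using poch_nz_Suc[OF pd] .
  have pa0: "pochhammer (2 + a + of_nat n) k \<noteq> 0" using poch_nz_Suc[OF pa] .
  have dk: "d + of_nat k \<noteq> 0" using pd by (simp add: pochhammer_rec')
  have ak: "2 + a + of_nat n + of_nat k \<noteq> 0" using pa by (simp add: pochhammer_rec')
  have L1: "pochhammer (1 + a + of_nat n) k * (1 + a + of_nat n + of_nat k) = (1 + a + of_nat n) * pochhammer (2 + a + of_nat n) k"
  proof -
    have "pochhammer (1 + a + of_nat n) (Suc k) = (1 + a + of_nat n + of_nat k) * pochhammer (1 + a + of_nat n) k"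
      by (rule pochhammer_rec')
    moreover have "pochhammer (1 + a + of_nat n) (Suc k) = (1 + a + of_nat n) * pochhammer (1 + a + of_nat n + 1) k"
      by (rule pochhammer_rec)
    moreover have "1 + a + of_nat n + 1 = 2 + a + of_nat n" by simp
    ultimately show ?thesis by (simp add: mult.commute)
  qed
  have p1nz: "pochhammer (1 + a + of_nat n) k \<noteq> 0"
    using L1 a1 pa0 by auto
  have e1: "DF a b d (Suc n) k = M * c1 * (a + 2 * of_nat k)"
  proof -
    have "1 + a + of_nat (Suc n) = 2 + a + of_nat n" by simp
    then show ?thesis unfolding DF_def M_def DM_def c1_def by (simp add: field_simps)
  qed
  have a1k: "1 + a + of_nat n + of_nat k \<noteq> 0"
  proof
    assume "1 + a + of_nat n + of_nat k = 0"
    then have "(1 + a + of_nat n) * pochhammer (2 + a + of_nat n) k = 0" using L1 by simp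
    then show False using a1 pa0 by simp
  qed
  have P1: "pochhammer (1 + a + of_nat n) k = (1 + a + of_nat n) * pochhammer (2 + a + of_nat n) k / (1 + a + of_nat n + of_nat k)"
    using L1 a1k by (simp add: field_simps)
  have e2: "DF a b d n k = M * c * (a + 2 * of_nat k) * (1 + a + of_nat n + of_nat k) / (1 + a + of_nat n)"
  proof -
    define p2 where "p2 = pochhammer (2 + a + of_nat n) k"
    define pA where "pA = pochhammer a k"
    define pB where "pB = pochhammer b k"
    define pD where "pD = pochhammer d k"
    define s where "s = (-1::complex)^k"
    have D1: "DF a b d n k = s * c * pA * (a + 2 * of_nat k) * pB^2 / (pD^2 * ((1 + a + of_nat n) * p2 / (1 + a + of_nat n + of_nat k)))"
      unfolding DF_def P1 c_def p2_def pA_def pB_def pD_def s_def ..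
    have M1: "M = s * pA * pB^2 / (pD^2 * p2)" unfolding M_def DM_def s_def pA_def pB_def pD_def p2_def ..
    have "pD \<noteq> 0" "p2 \<noteq> 0" using pd0 pa0 unfolding pD_def p2_def by auto
    then show ?thesis unfolding D1 M1 using a1 a1k by (simp add: field_simps)
  qed
  have e3: "Dg a b d n (Suc k) = M * c * (a + of_nat k) * (b + of_nat k)^2 / (of_nat n + d)^2"
  proof -
    have cc: "(of_nat (Suc n choose Suc k) - of_nat (n choose Suc k) :: complex) = c"
      unfolding c_def by simp
    have "DM a b d n (Suc k) = - M * (a + of_nat k) * (b + of_nat k)^2 / ((d + of_nat k)^2 * (2 + a + of_nat n + of_nat k))"
    proof -
      have h: "\<And>s pA pB pD p2 A B D Q :: complex. pD \<noteq> 0 \<Longrightarrow> p2 \<noteq> 0 \<Longrightarrow> D \<noteq> 0 \<Longrightarrow> Q \<noteq> 0 \<Longrightarrow>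
        (- s) * (A * pA) * (B * pB)^2 / ((D * pD)^2 * (Q * p2)) = - (s * pA * pB^2 / (pD^2 * p2)) * A * B^2 / (D^2 * Q)"
        by (simp add: field_simps)
      show ?thesis unfolding DM_def M_def pochhammer_rec' power_Suc
        using h[OF pd0 pa0 dk ak] by (simp add: add.assoc)
    qed
    moreover have "d + of_nat (Suc k) - 1 = d + of_nat k" by simp
    moreover have "a + of_nat n + 1 + of_nat (Suc k) = 2 + a + of_nat n + of_nat k" by simp
    ultimately have "Dg a b d n (Suc k) = - (- M * (a + of_nat k) * (b + of_nat k)^2 / ((d + of_nat k)^2 * (2 + a + of_nat n + of_nat k)))
       * c * (d + of_nat k)^2 * (2 + a + of_nat n + of_nat k) / (of_nat n + d)^2"
      unfolding Dg_def cc by simp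
    moreover have "\<And>A B D Q N :: complex. D \<noteq> 0 \<Longrightarrow> Q \<noteq> 0 \<Longrightarrow>
       - (- M * A * B^2 / (D^2 * Q)) * c * D^2 * Q / N = M * c * A * B^2 / N"
      by (simp add: field_simps)
    ultimately show ?thesis using dk ak by simp
  qed
  have e4: "Dg a b d n k = - M * c' * (d + of_nat k - 1)^2 * (a + of_nat n + 1 + of_nat k) / (of_nat n + d)^2"
    unfolding Dg_def M_def c'_def c1_def c_def by simp
  have K: "(c + c') * (a + 2*of_nat k) * (of_nat n+d)^2 - c * (a + 2*of_nat k) * (d - b + of_nat n) * (1 + a + of_nat n + of_nat k)
      = c * (a + of_nat k) * (b + of_nat k)^2 + c' * (d + of_nat k - 1)^2 * (a + of_nat n + 1 + of_nat k)"
  proof (rule key_alg[OF hb])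
    show "c' * (of_nat n + 1 - of_nat k) = c * of_nat k"
      unfolding c'_def c1_def c_def by (rule choose_rel)
    show "c' = 0" if "(of_nat k :: complex) = 0"
      using that unfolding c'_def c1_def c_def by simp
    show "c = 0" if "(of_nat k :: complex) = of_nat n + 1"
    proof -
      have "k = Suc n" using that by (metis of_nat_Suc of_nat_eq_iff add.commute)
      then show ?thesis unfolding c_def by simp
    qed
    show "of_nat n + d \<noteq> 0" by (rule nd)
  qed
  have c1e: "c1 = c + c'" unfolding c'_def by simp
  show ?thesis unfolding e1 e2 e3 e4 c1e
  proof -
    have "M * (c + c') * (a + 2 * of_nat k) - (a + of_nat n + 1) * (d - b + of_nat n) / (of_nat n + d)\<^sup>2 *
      (M * c * (a + 2 * of_nat k) * (1 + a + of_nat n + of_nat k) / (1 + a + of_nat n))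
      = M * ((c + c') * (a + 2*of_nat k) * (of_nat n+d)^2 - c * (a + 2*of_nat k) * (d - b + of_nat n) * (1 + a + of_nat n + of_nat k)) / (of_nat n + d)^2"
    proof -
      have g: "\<And>R N Y Z A. R \<noteq> 0 \<Longrightarrow> N \<noteq> 0 \<Longrightarrow>
        M * (c + c') * A - R * Y / N^2 * (M * c * A * Z / R) = M * ((c + c') * A * N^2 - c * A * Y * Z) / N^2"
        by (simp add: field_simps)
      have eq: "a + of_nat n + 1 = 1 + a + of_nat n" by simp
      show ?thesis unfolding eq by (rule g[OF a1 nd])
    qed
    also have "\<dots> = M * (c * (a + of_nat k) * (b + of_nat k)^2 + c' * (d + of_nat k - 1)^2 * (a + of_nat n + 1 + of_nat k)) / (of_nat n + d)^2"
      unfolding K ..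
    also have "\<dots> = M * c * (a + of_nat k) * (b + of_nat k)\<^sup>2 / (of_nat n + d)\<^sup>2 -
       - M * c' * (d + of_nat k - 1)\<^sup>2 * (a + of_nat n + 1 + of_nat k) / (of_nat n + d)\<^sup>2"
      using nd by (simp add: field_simps)
    finally show "M * (c + c') * (a + 2 * of_nat k) - (a + of_nat n + 1) * (d - b + of_nat n) / (of_nat n + d)\<^sup>2 *
      (M * c * (a + 2 * of_nat k) * (1 + a + of_nat n + of_nat k) / (1 + a + of_nat n)) =
      M * c * (a + of_nat k) * (b + of_nat k)\<^sup>2 / (of_nat n + d)\<^sup>2 -
       - M * c' * (d + of_nat k - 1)\<^sup>2 * (a + of_nat n + 1 + of_nat k) / (of_nat n + d)\<^sup>2" .
  qed
qed

lemma dougall: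
  assumes hb: "b = 1 + a - d"
  shows "(\<And>m. m \<le> 2*n \<Longrightarrow> d + of_nat m \<noteq> 0 \<and> 1 + a + of_nat m \<noteq> 0) \<Longrightarrow>
    (\<Sum>k=0..n. DF a b d n k) = pochhammer a (Suc n) * pochhammer (d - b) n / pochhammer d n ^ 2"
proof (induction n)
  case 0
  then show ?case by (simp add: DF_def)
next
  case (Suc n)
  note gen = Suc.prems
  have IH: "(\<Sum>k=0..n. DF a b d n k) = pochhammer a (Suc n) * pochhammer (d - b) n / pochhammer d n ^ 2"
    using Suc.IH gen by simp
  define \<rho> where "\<rho> = (a + of_nat n + 1) * (d - b + of_nat n) / (of_nat n + d)^2"
  have nd: "of_nat n + d \<noteq> 0" using gen[of n] by (simp add: add.commute)
  have a1: "1 + a + of_nat n \<noteq> 0" using gen[of n] by simp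
  have step: "DF a b d (Suc n) k = \<rho> * DF a b d n k + (Dg a b d n (Suc k) - Dg a b d n k)"
    if k: "k \<le> Suc n" for k
  proof -
    have pd: "pochhammer d (Suc k) \<noteq> 0"
    proof
      assume "pochhammer d (Suc k) = 0"
      then obtain j where j: "j < Suc k" "d = - of_nat j" by (auto simp: pochhammer_eq_0_iff)
      then show False using gen[of j] k by simp
    qed
    have pa: "pochhammer (2 + a + of_nat n) (Suc k) \<noteq> 0"
    proof
      assume "pochhammer (2 + a + of_nat n) (Suc k) = 0"
      then obtain j where j: "j < Suc k" "2 + a + of_nat n = - of_nat j" by (auto simp: pochhammer_eq_0_iff)
      have "1 + a + of_nat (n + 1 + j) = (2 + a + of_nat n) + of_nat j" by simp
      also have "\<dots> = 0" using j(2) by simp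
      finally have "1 + a + of_nat (n + 1 + j) = 0" .
      then show False using gen[of "n + 1 + j"] k j(1) by simp
    qed
    show ?thesis using wz_step[OF hb pd pa a1 nd] unfolding \<rho>_def by (simp add: algebra_simps)
  qed
  have "(\<Sum>k=0..Suc n. DF a b d (Suc n) k) = (\<Sum>k=0..Suc n. \<rho> * DF a b d n k + (Dg a b d n (Suc k) - Dg a b d n k))"
    using step by (intro sum.cong) auto
  also have "\<dots> = \<rho> * (\<Sum>k=0..Suc n. DF a b d n k) + (\<Sum>k=0..Suc n. Dg a b d n (Suc k) - Dg a b d n k)"
    by (simp add: sum.distrib sum_distrib_left distrib_left)
  also have "(\<Sum>k=0..Suc n. Dg a b d n (Suc k) - Dg a b d n k) = Dg a b d n (Suc (Suc n)) - Dg a b d n 0"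
    by (rule sum_Suc_diff) simp
  also have "Dg a b d n (Suc (Suc n)) = 0" by (simp add: Dg_def)
  also have "Dg a b d n 0 = 0" by (simp add: Dg_def)
  also have "(\<Sum>k=0..Suc n. DF a b d n k) = (\<Sum>k=0..n. DF a b d n k)"
    by (simp add: DF_def)
  also note IH
  finally have L: "(\<Sum>k=0..Suc n. DF a b d (Suc n) k) = \<rho> * (pochhammer a (Suc n) * pochhammer (d - b) n / pochhammer d n ^ 2)"
    by simp
  have pdn: "pochhammer d n \<noteq> 0"
  proof
    assume "pochhammer d n = 0"
    then obtain j where j: "j < n" "d = - of_nat j" by (auto simp: pochhammer_eq_0_iff)
    then show False using gen[of j] by simp
  qed
  have r1: "pochhammer a (Suc (Suc n)) = (a + of_nat n + 1) * pochhammer a (Suc n)"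
    by (simp add: pochhammer_rec' add.assoc)
  have r2: "pochhammer (d - b) (Suc n) = (d - b + of_nat n) * pochhammer (d - b) n"
    by (simp add: pochhammer_rec')
  have r3: "pochhammer d (Suc n) = (of_nat n + d) * pochhammer d n"
    by (simp add: pochhammer_rec' add.commute)
  have g: "\<And>A B X Y N Z :: complex. N \<noteq> 0 \<Longrightarrow> Z \<noteq> 0 \<Longrightarrow>
     A * B / N^2 * (X * Y / Z^2) = (A * X) * (B * Y) / (N * Z)^2"
    by (simp add: field_simps)
  show ?case unfolding L \<rho>_def r1 r2 r3 by (rule g[OF nd pdn])
qed



lemma prod_lin_coeffs:
  fixes \<alpha> \<beta> :: "nat \<Rightarrow> complex"
  assumes "finite S" "\<And>j. j \<in> S \<Longrightarrow> \<alpha> j \<noteq> 0"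
  shows "coeff (\<Prod>j\<in>S. [:\<alpha> j, \<beta> j:]) 0 = (\<Prod>j\<in>S. \<alpha> j)
       \<and> coeff (\<Prod>j\<in>S. [:\<alpha> j, \<beta> j:]) 1 = (\<Prod>j\<in>S. \<alpha> j) * (\<Sum>j\<in>S. \<beta> j / \<alpha> j)
       \<and> coeff (\<Prod>j\<in>S. [:\<alpha> j, \<beta> j:]) 2 = (\<Prod>j\<in>S. \<alpha> j) * (((\<Sum>j\<in>S. \<beta> j / \<alpha> j))^2 - (\<Sum>j\<in>S. (\<beta> j / \<alpha> j)^2)) / 2"
  using assms
proof (induction S rule: finite_induct)
  case empty
  then show ?case by simp
next
  case (insert i S)
  define p where "p = (\<Prod>j\<in>S. [:\<alpha> j, \<beta> j:])"
  define P where "P = (\<Prod>j\<in>S. \<alpha> j)"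
  define s where "s = (\<Sum>j\<in>S. \<beta> j / \<alpha> j)"
  define q where "q = (\<Sum>j\<in>S. (\<beta> j / \<alpha> j)^2)"
  have IH: "coeff p 0 = P" "coeff p 1 = P * s" "coeff p 2 = P * (s^2 - q) / 2"
    using insert unfolding p_def P_def s_def q_def by auto
  have ai: "\<alpha> i \<noteq> 0" using insert by auto
  have e: "(\<Prod>j\<in>insert i S. [:\<alpha> j, \<beta> j:]) = smult (\<alpha> i) p + pCons 0 (smult (\<beta> i) p)"
    using insert unfolding p_def by simp
  have c0: "coeff (\<Prod>j\<in>insert i S. [:\<alpha> j, \<beta> j:]) 0 = \<alpha> i * P" unfolding e using IH by simp
  have c1: "coeff (\<Prod>j\<in>insert i S. [:\<alpha> j, \<beta> j:]) 1 = \<alpha> i * (P * s) + \<beta> i * P"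
    unfolding e using IH by (simp add: coeff_pCons One_nat_def)
  have c2: "coeff (\<Prod>j\<in>insert i S. [:\<alpha> j, \<beta> j:]) 2 = \<alpha> i * (P * (s^2 - q) / 2) + \<beta> i * (P * s)"
  proof -
    have "coeff (\<Prod>j\<in>insert i S. [:\<alpha> j, \<beta> j:]) (Suc (Suc 0)) = \<alpha> i * coeff p 2 + \<beta> i * coeff p 1"
      unfolding e by (simp add: numeral_2_eq_2)
    then show ?thesis using IH by (simp add: numeral_2_eq_2)
  qed
  have sP: "(\<Prod>j\<in>insert i S. \<alpha> j) = \<alpha> i * P" using insert unfolding P_def by simp
  have sS: "(\<Sum>j\<in>insert i S. \<beta> j / \<alpha> j) = \<beta> i / \<alpha> i + s" using insert unfolding s_def by simp
  have sQ: "(\<Sum>j\<in>insert i S. (\<beta> j / \<alpha> j)^2) = (\<beta> i / \<alpha> i)^2 + q" using insert unfolding q_def by simp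
  show ?case unfolding c0 c1 c2 sP sS sQ using ai
    by (simp add: field_simps power2_eq_square)
qed

definition cc :: "complex \<Rightarrow> nat \<Rightarrow> nat \<Rightarrow> complex" where
  "cc x n k = (-1)^k * of_nat (n choose k) * pochhammer (2*x+1) k * (2*x + 1 + 2*of_nat k)
      / pochhammer (2*x + 1 + of_nat n) (Suc k)"

definition W :: "complex \<Rightarrow> nat \<Rightarrow> nat \<Rightarrow> complex poly" where
  "W x n k = (\<Prod>i\<in>{0..<n}. [:x + 1 + of_nat i, if i < k then 1 else -1:])"

lemma poch_nz:
  assumes "\<And>i. i < k \<Longrightarrow> z + of_nat i \<noteq> (0::complex)"
  shows "pochhammer z k \<noteq> 0"
proof
  assume "pochhammer z k = 0"
  then obtain j where "j < k" "z = - of_nat j" by (auto simp: pochhammer_eq_0_iff)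
  then show False using assms[of j] by simp
qed

lemma polyW:
  assumes "k \<le> n"
  shows "poly (W x n k) t = pochhammer (x + 1 + t) k * (\<Prod>i\<in>{k..<n}. x + 1 - t + of_nat i)"
proof -
  have "poly (W x n k) t = (\<Prod>i\<in>{0..<n}. x + 1 + of_nat i + t * (if i < k then 1 else -1))"
    unfolding W_def poly_prod by (simp add: algebra_simps)
  also have "\<dots> = (\<Prod>i\<in>{0..<k}. x + 1 + of_nat i + t * (if i < k then 1 else -1)) *
     (\<Prod>i\<in>{k..<n}. x + 1 + of_nat i + t * (if i < k then 1 else -1))"
    by (rule prod.atLeastLessThan_concat[symmetric]) (use assms in auto)
  also have "(\<Prod>i\<in>{0..<k}. x + 1 + of_nat i + t * (if i < k then 1 else -1)) = pochhammer (x + 1 + t) k"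
    unfolding pochhammer_prod by (intro prod.cong) (auto simp: algebra_simps)
  also have "(\<Prod>i\<in>{k..<n}. x + 1 + of_nat i + t * (if i < k then 1 else -1)) = (\<Prod>i\<in>{k..<n}. x + 1 - t + of_nat i)"
    by (intro prod.cong) (auto simp: algebra_simps)
  finally show ?thesis .
qed

lemma pochd_split:
  assumes "k \<le> n"
  shows "pochhammer (d::complex) n = pochhammer d k * (\<Prod>i\<in>{k..<n}. d + of_nat i)"
  unfolding pochhammer_prod by (rule prod.atLeastLessThan_concat[symmetric]) (use assms in auto)

lemma pointwise:
  assumes n1: "n \<ge> 1"
    and ha: "\<And>m. m \<le> 2*n \<Longrightarrow> 2 + 2*x + of_nat m \<noteq> 0"
    and ht: "\<And>m. m \<le> 2*n \<Longrightarrow> x + 1 - t + of_nat m \<noteq> 0"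
  shows "(\<Sum>k=0..n. cc x n k * poly (W x n k) t ^ 2) = pochhammer (2*x+1) n * pochhammer (-2*t) n"
proof -
  define a where "a = 2*x + 1"
  define b where "b = x + 1 + t"
  define d where "d = x + 1 - t"
  have hb: "b = 1 + a - d" unfolding a_def b_def d_def by simp
  have gen: "d + of_nat m \<noteq> 0 \<and> 1 + a + of_nat m \<noteq> 0" if "m \<le> 2*n" for m
    using ha[OF that] ht[OF that] unfolding a_def d_def by (simp add: algebra_simps)
  have D: "(\<Sum>k=0..n. DF a b d n k) = pochhammer a (Suc n) * pochhammer (d - b) n / pochhammer d n ^ 2"
    using dougall[OF hb, of n] gen by blast
  have db: "d - b = -2*t" unfolding d_def b_def by simp
  have an: "a + of_nat n \<noteq> 0"
  proof -
    obtain n' where n': "n = Suc n'" using n1 by (cases n) auto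
    have "1 + a + of_nat n' \<noteq> 0" using gen[of n'] n' by simp
    then show ?thesis unfolding n' by (simp add: algebra_simps)
  qed
  have pdn: "pochhammer d n \<noteq> 0"
    by (rule poch_nz) (use gen in auto)
  have termk: "DF a b d n k * pochhammer d n ^ 2 = (a + of_nat n) * (cc x n k * poly (W x n k) t ^ 2)"
    if k: "k \<le> n" for k
  proof -
    define Q where "Q = (\<Prod>i\<in>{k..<n}. d + of_nat i)"
    have pw: "poly (W x n k) t = pochhammer b k * Q"
      unfolding polyW[OF k] Q_def b_def d_def ..
    have pd: "pochhammer d n = pochhammer d k * Q" unfolding Q_def by (rule pochd_split[OF k])
    have pdk: "pochhammer d k \<noteq> 0" using pd pdn by auto
    have pc: "pochhammer (2*x + 1 + of_nat n) (Suc k) = (a + of_nat n) * pochhammer (1 + a + of_nat n) k"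
      unfolding pochhammer_rec a_def by (simp add: algebra_simps)
    have pq: "pochhammer (1 + a + of_nat n) k \<noteq> 0"
    proof (rule poch_nz)
      fix i assume i: "i < k"
      have "1 + a + of_nat (n + i) \<noteq> 0" using gen[of "n+i"] i k by simp
      then show "1 + a + of_nat n + of_nat i \<noteq> 0" by (simp add: add.assoc)
    qed
    have ccx: "cc x n k = (-1)^k * of_nat (n choose k) * pochhammer a k * (a + 2*of_nat k) / ((a + of_nat n) * pochhammer (1 + a + of_nat n) k)"
      unfolding cc_def pc by (simp add: a_def)
    have g: "\<And>s C A B Dk Q N R :: complex. Dk \<noteq> 0 \<Longrightarrow> N \<noteq> 0 \<Longrightarrow> R \<noteq> 0 \<Longrightarrow>
       s * C * A * B^2 / (Dk^2 * R) * (Dk * Q)^2 = N * (s * C * A / (N * R) * (B * Q)^2)"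
      by (simp add: field_simps)
    show ?thesis unfolding DF_def pd pw ccx
      by (rule g[OF pdk an pq])
  qed
  have "(a + of_nat n) * (\<Sum>k=0..n. cc x n k * poly (W x n k) t ^ 2) = (\<Sum>k=0..n. DF a b d n k) * pochhammer d n ^ 2"
    by (simp add: sum_distrib_left sum_distrib_right termk)
  also have "\<dots> = pochhammer a (Suc n) * pochhammer (d - b) n" unfolding D using pdn by simp
  also have "\<dots> = (a + of_nat n) * (pochhammer (2*x+1) n * pochhammer (-2*t) n)"
    unfolding db pochhammer_rec' a_def by simp
  finally show ?thesis using an by simp
qed

lemma poly_ident:
  assumes n1: "n \<ge> 1"
    and ha: "\<And>m. m \<le> 2*n \<Longrightarrow> 2 + 2*x + of_nat m \<noteq> 0"
  shows "(\<Sum>k\<in>{0..n}. smult (cc x n k) (W x n k ^ 2))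
       = smult (pochhammer (2*x+1) n) (\<Prod>i\<in>{0..<n}. [:of_nat i, -2:])"
proof (rule ccontr)
  define p where "p = (\<Sum>k\<in>{0..n}. smult (cc x n k) (W x n k ^ 2))
       - smult (pochhammer (2*x+1) n) (\<Prod>i\<in>{0..<n}. [:of_nat i, -2:])"
  assume "\<not> ?thesis"
  then have "p \<noteq> 0" unfolding p_def by simp
  then have fin: "finite {t. poly p t = 0}" by (rule poly_roots_finite)
  define B where "B = (\<lambda>m. x + 1 + of_nat m) ` {..2*n}"
  have "UNIV - B \<subseteq> {t. poly p t = 0}"
  proof
    fix t assume t: "t \<in> UNIV - B"
    have ht: "x + 1 - t + of_nat m \<noteq> 0" if "m \<le> 2*n" for m
    proof
      assume "x + 1 - t + of_nat m = 0"
      then have "t = x + 1 + of_nat m" by (simp add: algebra_simps)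
      then show False using t that unfolding B_def by auto
    qed
    have pw: "(\<Sum>k=0..n. cc x n k * poly (W x n k) t ^ 2) = pochhammer (2*x+1) n * pochhammer (-2*t) n"
      by (rule pointwise[OF n1 ha ht])
    have pr: "poly (\<Prod>i\<in>{0..<n}. [:of_nat i, -2:]) t = pochhammer (-2*t) n"
      unfolding poly_prod pochhammer_prod by (intro prod.cong) (auto simp: algebra_simps)
    show "t \<in> {t. poly p t = 0}"
      unfolding p_def using pw pr by (simp add: poly_sum)
  qed
  moreover have "infinite (UNIV - B)"
    using infinite_UNIV_char_0 unfolding B_def by (metis Diff_infinite_finite finite_atMost finite_imageI)
  ultimately show False using fin by (meson infinite_super)
qed

lemma Hx_alt: "Hx k x = (\<Sum>i\<in>{0..<k}. 1 / (x + 1 + of_nat i))"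
  by (induction k) (auto simp: Hx_def algebra_simps)

lemma coeffs_sq:
  fixes P s q :: complex
  assumes "coeff w 0 = P" "coeff w 1 = P * s" "coeff w 2 = P * (s^2 - q) / 2"
  shows "coeff (w^2) 0 = P^2" "coeff (w^2) 1 = 2 * P^2 * s" "coeff (w^2) 2 = P^2 * (2 * s^2 - q)"
proof -
  have A: "coeff (w^2) m = (\<Sum>i\<le>m. coeff w i * coeff w (m - i))" for m
    unfolding power2_eq_square coeff_mult ..
  show "coeff (w^2) 0 = P^2" unfolding A using assms by (simp add: power2_eq_square)
  show "coeff (w^2) 1 = 2 * P^2 * s" unfolding A using assms
    by (simp add: power2_eq_square atMost_Suc One_nat_def algebra_simps)
  have "coeff (w^2) 2 = coeff w 0 * coeff w 2 + coeff w 1 * coeff w 1 + coeff w 2 * coeff w 0"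
    unfolding A by (simp add: numeral_2_eq_2 atMost_Suc)
  also have "\<dots> = P * (P * (s^2 - q) / 2) + (P * s) * (P * s) + (P * (s^2 - q) / 2) * P"
    unfolding assms(1) assms(2)[unfolded One_nat_def] assms(3) One_nat_def ..
  also have "\<dots> = P^2 * (2 * s^2 - q)" by (simp add: power2_eq_square field_simps)
  finally show "coeff (w^2) 2 = P^2 * (2 * s^2 - q)" .
qed

lemma prod_fact_aux: "(\<Prod>i\<in>{1..<Suc m}. (of_nat i :: complex)) = fact m"
  by (induction m) (auto simp: prod.atLeastLessThan_Suc)

lemma sum_H_aux: "(\<Sum>i\<in>{1..<Suc m}. (-2) / (of_nat i :: complex)) = -2 * Hx m 0"
  by (induction m) (auto simp: sum.atLeastLessThan_Suc Hx_def algebra_simps)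

lemma generic:
  assumes n1: "n \<ge> 1"
    and ha: "\<And>m. m \<le> 2*n \<Longrightarrow> 2 + 2*x + of_nat m \<noteq> 0"
    and hx: "\<And>i. i < n \<Longrightarrow> x + 1 + of_nat i \<noteq> 0"
  shows "(\<Sum>k=0..n. cc x n k * Hx k x ^ 2)
     = pochhammer (2*x+1) n * fact (n - 1) / (2 * pochhammer (x+1) n ^ 2) * (Hx (n - 1) 0 - Hx n x)"
proof -
  obtain n' where n': "n = Suc n'" using n1 by (cases n) auto
  define Px where "Px = pochhammer (x+1) n"
  define \<sigma> where "\<sigma> = (\<Sum>i\<in>{0..<n}. (1 / (x + 1 + of_nat i))^2)"
  define Hn where "Hn = Hx n x"
  define A where "A = pochhammer (2*x+1) n"
  have Pxnz: "Px \<noteq> 0" unfolding Px_def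
    by (rule poch_nz) (use hx in \<open>auto simp: add.commute add.left_commute\<close>)
  have Wc: "coeff (W x n k ^ 2) 0 = Px^2 \<and> coeff (W x n k ^ 2) 1 = 2 * Px^2 * (2 * Hx k x - Hn)
        \<and> coeff (W x n k ^ 2) 2 = Px^2 * (2 * (2 * Hx k x - Hn)^2 - \<sigma>)" if k: "k \<le> n" for k
  proof -
    define \<beta> where "\<beta> = (\<lambda>i::nat. if i < k then (1::complex) else -1)"
    have L: "coeff (W x n k) 0 = (\<Prod>i\<in>{0..<n}. x + 1 + of_nat i)
       \<and> coeff (W x n k) 1 = (\<Prod>i\<in>{0..<n}. x + 1 + of_nat i) * (\<Sum>i\<in>{0..<n}. \<beta> i / (x + 1 + of_nat i))
       \<and> coeff (W x n k) 2 = (\<Prod>i\<in>{0..<n}. x + 1 + of_nat i) * (((\<Sum>i\<in>{0..<n}. \<beta> i / (x + 1 + of_nat i)))^2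
            - (\<Sum>i\<in>{0..<n}. (\<beta> i / (x + 1 + of_nat i))^2)) / 2"
      unfolding W_def \<beta>_def by (rule prod_lin_coeffs) (use hx in auto)
    have P: "(\<Prod>i\<in>{0..<n}. x + 1 + of_nat i) = Px" unfolding Px_def pochhammer_prod ..
    have Q: "(\<Sum>i\<in>{0..<n}. (\<beta> i / (x + 1 + of_nat i))^2) = \<sigma>"
      unfolding \<sigma>_def \<beta>_def by (intro sum.cong) (auto simp: power_divide)
    have S: "(\<Sum>i\<in>{0..<n}. \<beta> i / (x + 1 + of_nat i)) = 2 * Hx k x - Hn"
    proof -
      have "(\<Sum>i\<in>{0..<n}. \<beta> i / (x + 1 + of_nat i)) = (\<Sum>i\<in>{0..<k}. \<beta> i / (x + 1 + of_nat i)) + (\<Sum>i\<in>{k..<n}. \<beta> i / (x + 1 + of_nat i))"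
        by (rule sum.atLeastLessThan_concat[symmetric]) (use k in auto)
      also have "(\<Sum>i\<in>{0..<k}. \<beta> i / (x + 1 + of_nat i)) = Hx k x"
        unfolding Hx_alt \<beta>_def by (intro sum.cong) auto
      also have "(\<Sum>i\<in>{k..<n}. \<beta> i / (x + 1 + of_nat i)) = - (\<Sum>i\<in>{k..<n}. 1 / (x + 1 + of_nat i))"
        unfolding \<beta>_def by (simp add: sum_negf[symmetric])
      also have "(\<Sum>i\<in>{k..<n}. 1 / (x + 1 + of_nat i)) = Hn - Hx k x"
      proof -
        have "Hn = Hx k x + (\<Sum>i\<in>{k..<n}. 1 / (x + 1 + of_nat i))"
          unfolding Hn_def Hx_alt by (rule sum.atLeastLessThan_concat[symmetric]) (use k in auto)
        then show ?thesis by simp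
      qed
      finally show ?thesis by simp
    qed
    have L': "coeff (W x n k) 0 = Px" "coeff (W x n k) 1 = Px * (2 * Hx k x - Hn)"
       "coeff (W x n k) 2 = Px * ((2 * Hx k x - Hn)^2 - \<sigma>) / 2"
      using L unfolding P Q S by auto
    show ?thesis using coeffs_sq[OF L'] by simp
  qed
  define Q where "Q = (\<Prod>i\<in>{1..<n}. [:of_nat i, -2::complex:])"
  have Qc: "coeff Q 0 = fact n' \<and> coeff Q 1 = fact n' * (-2 * Hx n' 0)
     \<and> coeff Q 2 = fact n' * ((-2 * Hx n' 0)^2 - (\<Sum>i\<in>{1..<n}. (-2 / of_nat i)^2)) / 2"
  proof -
    have "coeff Q 0 = (\<Prod>i\<in>{1..<n}. of_nat i)
       \<and> coeff Q 1 = (\<Prod>i\<in>{1..<n}. of_nat i) * (\<Sum>i\<in>{1..<n}. (-2) / of_nat i)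
       \<and> coeff Q 2 = (\<Prod>i\<in>{1..<n}. of_nat i) * (((\<Sum>i\<in>{1..<n}. (-2) / of_nat i))^2 - (\<Sum>i\<in>{1..<n}. ((-2) / of_nat i)^2)) / 2"
      unfolding Q_def by (rule prod_lin_coeffs) auto
    then show ?thesis unfolding n' prod_fact_aux sum_H_aux by simp
  qed
  have Rsplit: "(\<Prod>i\<in>{0..<n}. [:of_nat i, -2::complex:]) = [:0, -2:] * Q"
    unfolding Q_def n' by (subst prod.atLeast_Suc_lessThan) auto
  have Rc: "coeff (\<Prod>i\<in>{0..<n}. [:of_nat i, -2::complex:]) 0 = 0"
     "coeff (\<Prod>i\<in>{0..<n}. [:of_nat i, -2::complex:]) 1 = -2 * coeff Q 0"
     "coeff (\<Prod>i\<in>{0..<n}. [:of_nat i, -2::complex:]) 2 = -2 * coeff Q 1"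
    unfolding Rsplit by (simp_all add: numeral_2_eq_2)
  have E: "(\<Sum>k\<in>{0..n}. cc x n k * coeff (W x n k ^ 2) m) = A * coeff (\<Prod>i\<in>{0..<n}. [:of_nat i, -2::complex:]) m" for m
    using arg_cong[OF poly_ident[OF n1 ha], of "\<lambda>p. coeff p m"] unfolding A_def
    by (simp add: coeff_sum)
  define S0 where "S0 = (\<Sum>k=0..n. cc x n k)"
  define S1 where "S1 = (\<Sum>k=0..n. cc x n k * Hx k x)"
  define S2 where "S2 = (\<Sum>k=0..n. cc x n k * Hx k x ^ 2)"
  have E0: "Px^2 * S0 = 0"
  proof -
    have "(\<Sum>k\<in>{0..n}. cc x n k * coeff (W x n k ^ 2) 0) = (\<Sum>k\<in>{0..n}. Px^2 * cc x n k)"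
      by (intro sum.cong) (use Wc in auto)
    then show ?thesis using E[of 0] Rc unfolding S0_def by (simp add: sum_distrib_left)
  qed
  then have S0z: "S0 = 0" using Pxnz by simp
  have E1: "4 * Px^2 * S1 - 2 * Px^2 * Hn * S0 = A * (-2 * fact n')"
  proof -
    have "(\<Sum>k\<in>{0..n}. cc x n k * coeff (W x n k ^ 2) 1) = (\<Sum>k\<in>{0..n}. 4 * Px^2 * (cc x n k * Hx k x) - 2 * Px^2 * Hn * cc x n k)"
    proof (intro sum.cong refl)
      fix k assume "k \<in> {0..n}"
      then have "coeff (W x n k ^ 2) 1 = 2 * Px^2 * (2 * Hx k x - Hn)" using Wc by auto
      then show "cc x n k * coeff (W x n k ^ 2) 1 = 4 * Px^2 * (cc x n k * Hx k x) - 2 * Px^2 * Hn * cc x n k"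
        by algebra
    qed
    also have "\<dots> = 4 * Px^2 * S1 - 2 * Px^2 * Hn * S0"
      unfolding S0_def S1_def by (simp add: sum_subtractf sum_distrib_left)
    finally show ?thesis using E[of 1] Rc Qc by simp
  qed
  have E2: "8 * Px^2 * S2 - 8 * Px^2 * Hn * S1 + Px^2 * (2 * Hn^2 - \<sigma>) * S0 = A * (-2 * (fact n' * (-2 * Hx n' 0)))"
  proof -
    have "(\<Sum>k\<in>{0..n}. cc x n k * coeff (W x n k ^ 2) 2) = (\<Sum>k\<in>{0..n}. 8 * Px^2 * (cc x n k * Hx k x ^ 2) - 8 * Px^2 * Hn * (cc x n k * Hx k x) + Px^2 * (2 * Hn^2 - \<sigma>) * cc x n k)"
    proof (intro sum.cong refl)
      fix k assume "k \<in> {0..n}"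
      then have "coeff (W x n k ^ 2) 2 = Px^2 * (2 * (2 * Hx k x - Hn)^2 - \<sigma>)" using Wc by auto
      then show "cc x n k * coeff (W x n k ^ 2) 2 = 8 * Px^2 * (cc x n k * Hx k x ^ 2) - 8 * Px^2 * Hn * (cc x n k * Hx k x) + Px^2 * (2 * Hn^2 - \<sigma>) * cc x n k"
        by algebra
    qed
    also have "\<dots> = 8 * Px^2 * S2 - 8 * Px^2 * Hn * S1 + Px^2 * (2 * Hn^2 - \<sigma>) * S0"
      unfolding S0_def S1_def S2_def by (simp add: sum.distrib sum_subtractf sum_distrib_left)
    finally show ?thesis using E[of 2] Rc Qc by simp
  qed
  have "S2 = A * fact n' / (2 * Px^2) * (Hx n' 0 - Hn)"
    using E1 E2 S0z Pxnz by (simp add: field_simps) algebra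
  then show ?thesis unfolding S2_def A_def Px_def Hn_def n' by simp
qed



lemma tend_poch: "((\<lambda>x. pochhammer (c * x + e) k) \<longlongrightarrow> pochhammer (c * x0 + e) k) (at (x0::complex))"
  unfolding pochhammer_prod by (intro tendsto_intros)

lemma tend_Hx:
  assumes "\<And>j. 1 \<le> j \<Longrightarrow> j \<le> k \<Longrightarrow> x0 + of_nat j \<noteq> (0::complex)"
  shows "((\<lambda>x. Hx k x) \<longlongrightarrow> Hx k x0) (at x0)"
  unfolding Hx_def by (intro tendsto_intros) (use assms in auto)

lemma conv_lhs:
  "(-1)^k * of_nat (n choose k)
            * (((2*x + of_nat k) gchoose k) / ((2*x + of_nat n + of_nat k) gchoose k))
            * ((1 + 2*x + 2 * of_nat k) / (1 + 2*x + of_nat n + of_nat k))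
            * (Hx k x)^2 = cc x n k * Hx k x ^ 2"
proof -
  have g1: "(2*x + of_nat k) gchoose k = pochhammer (2*x+1) k / fact k"
    by (simp add: gbinomial_pochhammer')
  have g2: "(2*x + of_nat n + of_nat k) gchoose k = pochhammer (2*x+1+of_nat n) k / fact k"
    by (simp add: gbinomial_pochhammer' algebra_simps)
  have p: "pochhammer (2*x + 1 + of_nat n) (Suc k) = (1 + 2*x + of_nat n + of_nat k) * pochhammer (2*x+1+of_nat n) k"
    by (simp add: pochhammer_rec' algebra_simps)
  have f: "(fact k :: complex) \<noteq> 0" by simp
  show ?thesis unfolding cc_def g1 g2 p using f
    by (simp add: field_simps)
qed

lemma conv_rhs:
  assumes "n \<ge> 1"
  shows "1 / (2 * of_nat n) * (((2*x + of_nat n) gchoose n) / ((x + of_nat n) gchoose n)^2)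
           * (Hx (n - 1) 0 - Hx n x)
     = pochhammer (2*x+1) n * fact (n - 1) / (2 * pochhammer (x+1) n ^ 2) * (Hx (n - 1) 0 - Hx n x)"
proof -
  obtain n' where n': "n = Suc n'" using assms by (cases n) auto
  have g1: "(2*x + of_nat n) gchoose n = pochhammer (2*x+1) n / fact n"
    by (simp add: gbinomial_pochhammer')
  have g2: "(x + of_nat n) gchoose n = pochhammer (x+1) n / fact n"
    by (simp add: gbinomial_pochhammer')
  have fn: "(fact n :: complex) = of_nat n * fact n'" unfolding n' by simp
  have f: "(fact n' :: complex) \<noteq> 0" by simp
  have nz: "(of_nat n :: complex) \<noteq> 0" using assms by simp
  have gen: "\<And>A B N F D :: complex. N \<noteq> 0 \<Longrightarrow> F \<noteq> 0 \<Longrightarrow>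
     1 / (2 * N) * ((A / (N * F)) / (B / (N * F))^2) * D = A * F / (2 * B^2) * D"
  proof -
    fix A B N F D :: complex assume "N \<noteq> 0" "F \<noteq> 0"
    then show "1 / (2 * N) * ((A / (N * F)) / (B / (N * F))^2) * D = A * F / (2 * B^2) * D"
      by (cases "B = 0") (simp_all add: field_simps power2_eq_square)
  qed
  have n1: "n - 1 = n'" unfolding n' by simp
  show ?thesis unfolding g1 g2 fn n1 by (rule gen[OF nz f])
qed

lemma tend_poch':
  fixes h :: "complex \<Rightarrow> complex"
  assumes "(h \<longlongrightarrow> h x0) (at (x0::complex))"
  shows "((\<lambda>x. pochhammer (h x) k) \<longlongrightarrow> pochhammer (h x0) k) (at x0)"
  unfolding pochhammer_prod by (rule tendsto_prod) (intro tendsto_add assms tendsto_const)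

lemma ev_neq: "eventually (\<lambda>y. y \<noteq> (p::complex)) (at x)"
  by (rule eventually_neq_at_within)

theorem theorem7:
  fixes n :: nat and x :: complex
  assumes "n \<ge> 1"
    and "\<And>j. 1 \<le> j \<Longrightarrow> j \<le> n \<Longrightarrow> x + of_nat j \<noteq> 0"
    and "\<And>k. k \<le> n \<Longrightarrow> (2*x + of_nat n + of_nat k) gchoose k \<noteq> 0"
    and "\<And>k. k \<le> n \<Longrightarrow> 1 + 2*x + of_nat n + of_nat k \<noteq> 0"
    and "(x + of_nat n) gchoose n \<noteq> 0"
  shows "(\<Sum>k=0..n. (-1)^k * of_nat (n choose k)
            * (((2*x + of_nat k) gchoose k) / ((2*x + of_nat n + of_nat k) gchoose k))
            * ((1 + 2*x + 2 * of_nat k) / (1 + 2*x + of_nat n + of_nat k))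
            * (Hx k x)^2)
       = 1 / (2 * of_nat n) * (((2*x + of_nat n) gchoose n) / ((x + of_nat n) gchoose n)^2)
           * (Hx (n - 1) 0 - Hx n x)"
proof -
  note n1 = assms(1)
  define f where "f = (\<lambda>y. \<Sum>k=0..n. cc y n k * Hx k y ^ 2)"
  define g where "g = (\<lambda>y. pochhammer (2*y+1) n * fact (n - 1) / (2 * pochhammer (y+1) n ^ 2) * (Hx (n - 1) 0 - Hx n y))"
  have lhs: "(\<Sum>k=0..n. (-1)^k * of_nat (n choose k)
            * (((2*x + of_nat k) gchoose k) / ((2*x + of_nat n + of_nat k) gchoose k))
            * ((1 + 2*x + 2 * of_nat k) / (1 + 2*x + of_nat n + of_nat k))
            * (Hx k x)^2) = f x"
    unfolding f_def by (intro sum.cong refl conv_lhs)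
  have rhs: "1 / (2 * of_nat n) * (((2*x + of_nat n) gchoose n) / ((x + of_nat n) gchoose n)^2)
           * (Hx (n - 1) 0 - Hx n x) = g x"
    unfolding g_def by (rule conv_rhs[OF n1])
  have den1: "pochhammer (2*x + 1 + of_nat n) (Suc k) \<noteq> 0" if k: "k \<le> n" for k
  proof -
    have "(2*x + of_nat n + of_nat k) gchoose k = pochhammer (2*x+1+of_nat n) k / fact k"
      by (simp add: gbinomial_pochhammer' algebra_simps)
    then have "pochhammer (2*x+1+of_nat n) k \<noteq> 0" using assms(3)[OF k] by auto
    moreover have "1 + 2*x + of_nat n + of_nat k \<noteq> 0" using assms(4)[OF k] .
    moreover have "pochhammer (2*x + 1 + of_nat n) (Suc k) = (1 + 2*x + of_nat n + of_nat k) * pochhammer (2*x+1+of_nat n) k"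
      by (simp add: pochhammer_rec' algebra_simps)
    ultimately show ?thesis by simp
  qed
  have den2: "pochhammer (x + 1) n \<noteq> 0"
  proof -
    have "(x + of_nat n) gchoose n = pochhammer (x+1) n / fact n"
      by (simp add: gbinomial_pochhammer')
    then show ?thesis using assms(5) by auto
  qed
  have tH: "((\<lambda>y. Hx k y) \<longlongrightarrow> Hx k x) (at x)" if "k \<le> n" for k
    by (rule tend_Hx) (use assms(2) that in auto)
  have tf: "(f \<longlongrightarrow> f x) (at x)"
    unfolding f_def cc_def
    by (intro tendsto_intros tend_poch' tH) (use den1 in auto)
  have tg: "(g \<longlongrightarrow> g x) (at x)"
    unfolding g_def
    by (intro tendsto_intros tend_poch' tH) (use den2 in auto)
  have ev1: "eventually (\<lambda>y. \<forall>m\<in>{..2*n}. 2 + 2*y + of_nat m \<noteq> 0) (at x)"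
  proof (rule eventually_ball_finite)
    show "\<forall>m\<in>{..2*n}. eventually (\<lambda>y. 2 + 2*y + of_nat m \<noteq> 0) (at x)"
    proof
      fix m :: nat
      show "eventually (\<lambda>y. 2 + 2*y + of_nat m \<noteq> 0) (at x)"
      proof (rule eventually_mono[OF ev_neq[of "- (2 + of_nat m) / 2"]])
        fix y :: complex assume "y \<noteq> - (2 + of_nat m) / 2"
        show "2 + 2*y + of_nat m \<noteq> 0"
        proof
          assume h: "2 + 2*y + of_nat m = 0"
          have "2*y = - (2 + of_nat m)" using h by (simp add: eq_neg_iff_add_eq_0 algebra_simps)
          then have "y = - (2 + of_nat m) / 2" by (simp add: field_simps)
          then show False using \<open>y \<noteq> - (2 + of_nat m) / 2\<close> by simp
        qed
      qed
    qed
  qed simp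
  have ev2: "eventually (\<lambda>y. \<forall>i\<in>{..<n}. y + 1 + of_nat i \<noteq> 0) (at x)"
  proof (rule eventually_ball_finite)
    show "\<forall>i\<in>{..<n}. eventually (\<lambda>y. y + 1 + of_nat i \<noteq> 0) (at x)"
    proof
      fix i :: nat
      show "eventually (\<lambda>y. y + 1 + of_nat i \<noteq> 0) (at x)"
      proof (rule eventually_mono[OF ev_neq[of "- (1 + of_nat i)"]])
        fix y :: complex assume "y \<noteq> - (1 + of_nat i)"
        then show "y + 1 + of_nat i \<noteq> 0" by (auto simp: algebra_simps add_eq_0_iff)
      qed
    qed
  qed simp
  have ev: "eventually (\<lambda>y. f y = g y) (at x)"
    using ev1 ev2
  proof eventually_elim
    case (elim y)
    show ?case unfolding f_def g_def
      by (rule generic[OF n1]) (use elim in auto)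
  qed
  have "(f \<longlongrightarrow> g x) (at x)"
    using tendsto_cong[OF ev] tg by simp
  then have "f x = g x" using tf by (intro tendsto_unique[OF at_neq_bot]) auto
  then show ?thesis unfolding lhs rhs .
qed


end
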